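(* Let $X=[x_0,\ldots,x_k]$ be $k+1$ linearly independent unit vectors of $\mathbb R^{n+1}$, viewed as points of the unit sphere $\mathcal S_n$ with its canonical metric. Then $\mathrm{EBS}(x_0,\ldots,x_k)\subseteq \mathrm{Span}\{x_0,\ldots,x_k\}\cap\mathcal S_n$, and the affine span $\mathrm{Aff}(x_0,\ldots,x_k)$ equals $\mathrm{Span}\{x_0,\ldots,x_k\}\cap\mathcal S_n$, i.e. the great $k$-dimensional subsphere containing the reference points. In particular the affine span depends on the reference points only through the linear subspace $\mathrm{Span}\{x_0,\ldots,x_k\}$.
   Context: On $\mathcal S_n$ the cut locus of $x$ is $\{-x\}$ and $\log_x(y)=\frac{\theta}{\sin\theta}(y-\cos\theta\,x)$ with $\theta=\arccos(x^\top y)$. For reference points $x_0,\ldots,x_k$, $\mathcal M^*=\mathcal S_n\setminus\{-x_0,\ldots,-x_k\}$; $\mathcal P^*_k=\{(\lambda_0:\cdots:\lambda_k)\in\mathbb RP^k:\sum_i\lambda_i\neq0\}$; $\mathrm{EBS}(x_0,\ldots,x_k)=\{x\in\mathcal M^*:\exists\lambda\in\mathcal P^*_k,\ \sum_i\lambda_i\log_x(x_i)=0\}$; the affine span $\mathrm{Aff}(x_0,\ldots,x_k)$ is the closure of $\mathrm{EBS}(x_0,\ldots,x_k)$ in $\mathcal S_n$. *)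

theory Defs
  imports "HOL-Analysis.Analysis"
begin

definition usphere :: "'a::euclidean_space set" where
  "usphere = {x. norm x = 1}"

definition sph_log :: "'a::euclidean_space \<Rightarrow> 'a \<Rightarrow> 'a" where
  "sph_log x y = (let \<theta> = arccos (x \<bullet> y) in (\<theta> / sin \<theta>) *\<^sub>R (y - cos \<theta> *\<^sub>R x))"

text \<open>M* = S_n minus the antipodes (cut points) of the reference points x_0..x_k.\<close>
definition Mstar :: "(nat \<Rightarrow> 'a::euclidean_space) \<Rightarrow> nat \<Rightarrow> 'a set" where
  "Mstar X k = usphere - {- X i | i. i \<le> k}"

text \<open>A point of P*_k is represented by any
  representative weight vector lambda with sum lambda_i \<noteq> 0; the condition is
  invariant under rescaling, so this is the unfolded projective definition.\<close>
definition EBS :: "(nat \<Rightarrow> 'a::euclidean_space) \<Rightarrow> nat \<Rightarrow> 'a set" where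
  "EBS X k = {x \<in> Mstar X k. \<exists>w::nat \<Rightarrow> real.
      (\<Sum>i\<le>k. w i) \<noteq> 0 \<and> (\<Sum>i\<le>k. w i *\<^sub>R sph_log x (X i)) = 0}"

text \<open>Affine span: closure of EBS (S_n is closed, so closure in S_n equals closure
  in the ambient space).\<close>
definition Aff :: "(nat \<Rightarrow> 'a::euclidean_space) \<Rightarrow> nat \<Rightarrow> 'a set" where
  "Aff X k = closure (EBS X k)"

end

theory Submission
  imports Defs "HOL-Complex_Analysis.Complex_Analysis"
begin


lemma unit_inner_abs: "norm (x::'a::euclidean_space) = 1 \<Longrightarrow> norm y = 1 \<Longrightarrow> \<bar>x \<bullet> y\<bar> \<le> 1"
  using Cauchy_Schwarz_ineq2[of x y] by simp

lemma unit_inner_one: "norm (x::'a::euclidean_space) = 1 \<Longrightarrow> norm y = 1 \<Longrightarrow> x \<bullet> y = 1 \<Longrightarrow> x = y"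
proof -
  assume a: "norm x = 1" "norm y = 1" "x \<bullet> y = 1"
  have "norm (x - y)^2 = (x \<bullet> x) - 2 * (x \<bullet> y) + y \<bullet> y"
    by (simp add: power2_norm_eq_inner inner_diff inner_commute)
  also have "\<dots> = 0" using a by (simp add: dot_square_norm)
  finally show ?thesis by simp
qed

lemma unit_inner_mone: "norm (x::'a::euclidean_space) = 1 \<Longrightarrow> norm y = 1 \<Longrightarrow> x \<bullet> y = -1 \<Longrightarrow> x = - y"
  using unit_inner_one[of x "-y"] by simp

lemma coords_exist:
  fixes X :: "nat \<Rightarrow> 'a::euclidean_space" and k :: nat
  assumes "inj_on X {..k}" "x \<in> span (X ` {..k})"
  shows "\<exists>a. x = (\<Sum>i\<le>k. a i *\<^sub>R X i)"
proof -
  have fin: "finite (X ` {..k})" by simp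
  obtain u where u: "x = (\<Sum>v\<in>X ` {..k}. u v *\<^sub>R v)"
    using assms(2) span_finite[OF fin] by auto
  have "(\<Sum>v\<in>X ` {..k}. u v *\<^sub>R v) = (\<Sum>i\<le>k. u (X i) *\<^sub>R X i)"
    using sum.reindex[OF assms(1), of "\<lambda>v. u v *\<^sub>R v"] by simp
  then show ?thesis using u by (intro exI[of _ "\<lambda>i. u (X i)"]) simp
qed

lemma coords_zero:
  fixes X :: "nat \<Rightarrow> 'a::euclidean_space" and k :: nat
  assumes "inj_on X {..k}" "independent (X ` {..k})" "(\<Sum>i\<le>k. a i *\<^sub>R X i) = 0"
  shows "\<forall>i\<le>k. a i = 0"
proof (intro allI impI)
  fix i assume i: "i \<le> k"
  define u where "u v = a (the_inv_into {..k} X v)" for v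
  have "(\<Sum>v\<in>X ` {..k}. u v *\<^sub>R v) = (\<Sum>i\<le>k. u (X i) *\<^sub>R X i)"
    using sum.reindex[OF assms(1), of "\<lambda>v. u v *\<^sub>R v"] by simp
  also have "\<dots> = (\<Sum>i\<le>k. a i *\<^sub>R X i)"
    by (rule sum.cong) (auto simp: u_def the_inv_into_f_f[OF assms(1)])
  finally have "(\<Sum>v\<in>X ` {..k}. u v *\<^sub>R v) = 0" using assms(3) by simp
  moreover have fin: "finite (X ` {..k})" by simp
  ultimately have "u (X i) = 0"
    using independentD[OF assms(2) fin, of u "X i"] i by auto
  then show "a i = 0" by (simp add: u_def the_inv_into_f_f[OF assms(1)] i)
qed

lemma coords_unique:
  fixes X :: "nat \<Rightarrow> 'a::euclidean_space" and k :: nat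
  assumes "inj_on X {..k}" "independent (X ` {..k})"
    "(\<Sum>i\<le>k. a i *\<^sub>R X i) = (\<Sum>i\<le>k. b i *\<^sub>R X i)"
  shows "\<forall>i\<le>k. a i = b i"
proof -
  have "(\<Sum>i\<le>k. (a i - b i) *\<^sub>R X i) = 0"
    using assms(3) by (simp add: scaleR_diff_left sum_subtractf)
  then show ?thesis using coords_zero[OF assms(1,2)] by force
qed

lemma sph_log_unit:
  fixes x y :: "'a::euclidean_space"
  assumes "norm x = 1" "norm y = 1"
  shows "sph_log x y = (arccos (x \<bullet> y) / sin (arccos (x \<bullet> y))) *\<^sub>R (y - (x \<bullet> y) *\<^sub>R x)"
  using unit_inner_abs[OF assms] by (simp add: sph_log_def Let_def cos_arccos_abs)

lemma coef_zero_cases: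
  fixes x y :: "'a::euclidean_space"
  assumes "norm x = 1" "norm y = 1" "arccos (x \<bullet> y) / sin (arccos (x \<bullet> y)) = 0"
  shows "x = y \<or> x = - y"
proof -
  have b: "\<bar>x \<bullet> y\<bar> \<le> 1" using unit_inner_abs[OF assms(1,2)] .
  have "arccos (x \<bullet> y) = 0 \<or> sin (arccos (x \<bullet> y)) = 0" using assms(3) by simp
  then have "x \<bullet> y = 1 \<or> x \<bullet> y = -1"
  proof
    assume "arccos (x \<bullet> y) = 0"
    then show ?thesis using arccos_eq_0_iff[of "x \<bullet> y"] b by (auto simp: abs_le_iff)
  next
    assume "sin (arccos (x \<bullet> y)) = 0"
    then show ?thesis using sin_arccos_nonzero[of "x \<bullet> y"] b by force
  qed
  then show ?thesis using unit_inner_one[OF assms(1,2)] unit_inner_mone[OF assms(1,2)] by blast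
qed

lemma ebs_suff:
  fixes X :: "nat \<Rightarrow> 'a::euclidean_space" and k :: nat and y :: 'a and b :: "nat \<Rightarrow> real"
  assumes y1: "norm y = 1" and X1: "\<forall>i\<le>k. norm (X i) = 1" and na: "\<forall>i\<le>k. y \<noteq> - X i"
    and yb: "y = (\<Sum>i\<le>k. b i *\<^sub>R X i)"
    and nz: "(\<Sum>i\<le>k. b i * (sin (arccos (y \<bullet> X i)) / arccos (y \<bullet> X i))) \<noteq> 0"
  shows "y \<in> EBS X k"
proof -
  define w where "w i = b i * (sin (arccos (y \<bullet> X i)) / arccos (y \<bullet> X i))" for i
  have each: "w i *\<^sub>R sph_log y (X i) = b i *\<^sub>R X i - (b i * (y \<bullet> X i)) *\<^sub>R y" if i: "i \<le> k" for i
  proof -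
    define \<theta> where "\<theta> = arccos (y \<bullet> X i)"
    have Xi: "norm (X i) = 1" using X1 i by auto
    have sl: "sph_log y (X i) = (\<theta> / sin \<theta>) *\<^sub>R (X i - (y \<bullet> X i) *\<^sub>R y)"
      using sph_log_unit[OF y1 Xi] by (simp add: \<theta>_def)
    show ?thesis
    proof (cases "\<theta> / sin \<theta> = 0")
      case True
      then have "y = X i \<or> y = - X i" using coef_zero_cases[OF y1 Xi] by (simp add: \<theta>_def)
      then have "y = X i" using na i by auto
      then have "y \<bullet> X i = 1" using Xi by (simp add: dot_square_norm)
      then show ?thesis using sl True \<open>y = X i\<close> by simp
    next
      case False
      then have "\<theta> \<noteq> 0" "sin \<theta> \<noteq> 0" by auto
      then have "w i * (\<theta> / sin \<theta>) = b i" by (simp add: w_def \<theta>_def[symmetric])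
      moreover have "w i *\<^sub>R sph_log y (X i) = (w i * (\<theta> / sin \<theta>)) *\<^sub>R (X i - (y \<bullet> X i) *\<^sub>R y)"
        using sl by simp
      ultimately show ?thesis by (simp add: scaleR_diff_right)
    qed
  qed
  have "(\<Sum>i\<le>k. w i *\<^sub>R sph_log y (X i)) = (\<Sum>i\<le>k. b i *\<^sub>R X i) - (\<Sum>i\<le>k. b i * (y \<bullet> X i)) *\<^sub>R y"
    by (simp add: each sum_subtractf scaleR_sum_left)
  also have "(\<Sum>i\<le>k. b i * (y \<bullet> X i)) = y \<bullet> y"
    by (subst (2) yb) (simp add: inner_sum_right)
  also have "y \<bullet> y = 1" using y1 by (simp add: dot_square_norm)
  finally have "(\<Sum>i\<le>k. w i *\<^sub>R sph_log y (X i)) = 0" using yb by simp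
  moreover have "y \<in> Mstar X k" using y1 na by (auto simp: Mstar_def usphere_def)
  moreover have "(\<Sum>i\<le>k. w i) \<noteq> 0" using nz by (simp add: w_def)
  ultimately show ?thesis unfolding EBS_def by blast
qed

lemma ebs_span:
  fixes X :: "nat \<Rightarrow> 'a::euclidean_space" and k :: nat
  assumes X1: "\<forall>i\<le>k. norm (X i) = 1" and inj: "inj_on X {..k}" and ind: "independent (X ` {..k})"
  shows "EBS X k \<subseteq> span (X ` {..k}) \<inter> usphere"
proof
  fix x assume "x \<in> EBS X k"
  then obtain w where xM: "x \<in> Mstar X k" and ws: "(\<Sum>i\<le>k. w i) \<noteq> 0"
    and wl: "(\<Sum>i\<le>k. w i *\<^sub>R sph_log x (X i)) = 0" unfolding EBS_def by blast
  have x1: "norm x = 1" and na: "\<forall>i\<le>k. x \<noteq> - X i" using xM by (auto simp: Mstar_def usphere_def)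
  define c where "c i = arccos (x \<bullet> X i) / sin (arccos (x \<bullet> X i))" for i
  have "(\<Sum>i\<le>k. w i *\<^sub>R sph_log x (X i)) = (\<Sum>i\<le>k. (w i * c i) *\<^sub>R X i) - (\<Sum>i\<le>k. w i * c i * (x \<bullet> X i)) *\<^sub>R x"
    using X1 by (simp add: sph_log_unit[OF x1] c_def scaleR_diff_right sum_subtractf scaleR_sum_left)
      (auto intro!: sum.cong simp: mult.assoc)
  then have eq: "(\<Sum>i\<le>k. (w i * c i) *\<^sub>R X i) = (\<Sum>i\<le>k. w i * c i * (x \<bullet> X i)) *\<^sub>R x"
    using wl by simp
  have "x \<in> span (X ` {..k})"
  proof (cases "(\<Sum>i\<le>k. w i * c i * (x \<bullet> X i)) = 0")
    case False
    have "(\<Sum>i\<le>k. (w i * c i) *\<^sub>R X i) \<in> span (X ` {..k})"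
      by (intro span_sum span_scale span_base) auto
    then have "(1 / (\<Sum>i\<le>k. w i * c i * (x \<bullet> X i))) *\<^sub>R ((\<Sum>i\<le>k. w i * c i * (x \<bullet> X i)) *\<^sub>R x) \<in> span (X ` {..k})"
      using eq by (metis span_scale)
    then show ?thesis using False by simp
  next
    case True
    then have "\<forall>i\<le>k. w i * c i = 0" using eq coords_zero[OF inj ind, of "\<lambda>i. w i * c i"] by simp
    moreover obtain j where j: "j \<le> k" "w j \<noteq> 0"
      using ws by (metis (no_types, lifting) atMost_iff sum.neutral)
    ultimately have "c j = 0" by auto
    then have "x = X j \<or> x = - X j" using coef_zero_cases[OF x1, of "X j"] X1 j by (simp add: c_def)
    then have "x = X j" using na j by auto
    then show ?thesis using j by (auto intro: span_base)
  qed
  then show "x \<in> span (X ` {..k}) \<inter> usphere" using x1 by (simp add: usphere_def)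
qed



lemma nonzero_near_zero:
  fixes F :: "complex \<Rightarrow> complex" and f :: "real \<Rightarrow> real" and S :: "complex set"
  assumes hol: "F holomorphic_on S" and op: "open S" and sub: "of_real ` {0<..<1} \<subseteq> S"
    and eq: "\<And>t. t \<in> {0<..<1} \<Longrightarrow> F (of_real t) = of_real (f t)"
    and t1: "t1 \<in> {0<..<1}" "f t1 \<noteq> 0" and d: "0 < \<delta>"
  shows "\<exists>t. 0 < t \<and> t < \<delta> \<and> t < 1 \<and> f t \<noteq> 0"
proof (rule ccontr)
  assume H: "\<not> ?thesis"
  define d' where "d' = min \<delta> 1"
  have d': "0 < d'" "d' \<le> 1" "d' \<le> \<delta>" using d by (auto simp: d'_def)
  define T where "T = connected_component_set S (of_real (1/2))"
  have oT: "open T" using op by (simp add: T_def open_connected_component)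
  have cT: "connected T" by (simp add: T_def)
  have conI: "connected ((of_real :: real \<Rightarrow> complex) ` {0<..<1})"
    by (intro connected_continuous_image continuous_intros) simp
  have subT: "of_real ` {0<..<1} \<subseteq> T"
    unfolding T_def
  proof (rule connected_component_maximal[OF _ conI sub])
    show "of_real (1/2) \<in> (of_real :: real \<Rightarrow> complex) ` {0<..<1}" by (rule imageI) simp
  qed
  have holT: "F holomorphic_on T"
    using hol by (rule holomorphic_on_subset) (simp add: T_def connected_component_subset)
  define U where "U = (of_real :: real \<Rightarrow> complex) ` {0<..<d'}"
  have UT: "U \<subseteq> T" using subT d' by (auto simp: U_def)
  have \<xi>T: "of_real (d'/2) \<in> T"
  proof -
    have "(of_real (d'/2) :: complex) \<in> of_real ` {0<..<1}" by (rule imageI) (use d' in auto)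
    then show ?thesis using subT by blast
  qed
  have lim: "of_real (d'/2) islimpt U"
    unfolding islimpt_approachable
  proof (intro allI impI)
    fix e :: real assume e: "0 < e"
    define u where "u = d'/2 + min (e/2) (d'/4)"
    have "u \<in> {0<..<d'}" using e d' by (auto simp: u_def min_def)
    moreover have "u \<noteq> d'/2" using e d' by (auto simp: u_def min_def)
    moreover have "dist u (d'/2) < e" using e d' by (auto simp: u_def min_def dist_real_def)
    ultimately show "\<exists>x'\<in>U. x' \<noteq> of_real (d'/2) \<and> dist x' (of_real (d'/2)) < e"
    proof (intro bexI[of _ "of_real u"] conjI)
      show "(of_real u :: complex) \<noteq> of_real (d'/2)" using \<open>u \<noteq> d'/2\<close> by (simp only: of_real_eq_iff) simp
      show "dist (of_real u :: complex) (of_real (d'/2)) < e"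
        using \<open>dist u (d'/2) < e\<close> by (simp only: dist_of_real)
      show "(of_real u :: complex) \<in> U" using \<open>u \<in> {0<..<d'}\<close> by (simp add: U_def)
    qed
  qed
  have F0: "F z = 0" if zU: "z \<in> U" for z
  proof -
    obtain t where t: "t \<in> {0<..<d'}" "z = of_real t" using zU unfolding U_def by blast
    then have "f t = 0" using H d' by auto
    then show ?thesis using eq[of t] t d' by auto
  qed
  have "F (of_real t1) = 0"
    by (rule analytic_continuation[OF holT oT cT UT \<xi>T lim F0]) (use subT t1 in auto)
  then show False using eq[OF t1(1)] t1(2) by simp
qed



lemma sum_delta_scale:
  fixes X :: "nat \<Rightarrow> 'a::real_vector"
  assumes "j \<le> k"
  shows "(\<Sum>i\<le>k. (if i = j then r else 0) *\<^sub>R X i) = r *\<^sub>R X j"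
proof -
  have "(\<Sum>i\<le>k. (if i = j then r else 0) *\<^sub>R X i) = (\<Sum>i\<le>k. if i = j then r *\<^sub>R X i else 0)"
    by (rule sum.cong) auto
  also have "\<dots> = r *\<^sub>R X j" using assms by (simp add: sum.delta)
  finally show ?thesis .
qed

lemma abs_sinc_le1: "\<bar>sin (\<theta>::real) / \<theta>\<bar> \<le> 1"
proof (cases "\<theta> = 0")
  case False
  then show ?thesis using abs_sin_x_le_abs_x[of \<theta>] by (simp add: abs_divide divide_le_eq_1)
qed simp

lemma sinc_at_0': "((\<lambda>x. sin x / x::real) \<longlongrightarrow> 1) (at 0)"
  using DERIV_sin [of 0] by (auto simp add: has_field_derivative_def field_has_derivative_at)

lemma chord_density:
  fixes X :: "nat \<Rightarrow> 'a::euclidean_space" and k m :: nat and x :: 'a and a :: "nat \<Rightarrow> real"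
  assumes X1: "\<forall>i\<le>k. norm (X i) = 1" and inj: "inj_on X {..k}" and ind: "independent (X ` {..k})"
    and x1: "norm x = 1" and xa: "x = (\<Sum>i\<le>k. a i *\<^sub>R X i)"
    and m: "m \<le> k" and am: "0 \<le> a m" and xm: "x \<noteq> X m"
  shows "x \<in> closure (EBS X k)"
proof -
  have Xm1: "norm (X m) = 1" using X1 m by auto
  define p where "p i = x \<bullet> X i" for i
  define q where "q i = X m \<bullet> X i" for i
  define c where "c t = (1 - t) *\<^sub>R x + t *\<^sub>R X m" for t
  define N where "N t = norm (c t)" for t
  define s where "s i t = ((1 - t) * p i + t * q i) / N t" for i t
  define B where "B i t = (1 - t) * a i + (if i = m then t else 0)" for i t
  define G where "G u = sin (arccos u) / arccos u" for u
  define psi where "psi t = (\<Sum>i\<le>k. B i t * G (s i t))" for t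
  have cB: "c t = (\<Sum>i\<le>k. B i t *\<^sub>R X i)" for t
  proof -
    have "(\<Sum>i\<le>k. B i t *\<^sub>R X i) = (\<Sum>i\<le>k. ((1 - t) * a i) *\<^sub>R X i) + (\<Sum>i\<le>k. (if i = m then t else 0) *\<^sub>R X i)"
      by (simp add: B_def scaleR_add_left sum.distrib)
    also have "\<dots> = (1 - t) *\<^sub>R x + t *\<^sub>R X m"
      using sum_delta_scale[OF m, of t X] by (simp add: xa scaleR_sum_right)
    finally show ?thesis by (simp add: c_def)
  qed
  have cX: "c t \<bullet> X i = (1 - t) * p i + t * q i" for t i
    by (simp add: c_def p_def q_def inner_add_left)
  have Nsq: "(N t)^2 = (1 - t)^2 + 2 * t * (1 - t) * p m + t^2" for t
  proof -
    have "(N t)^2 = c t \<bullet> c t" by (simp add: N_def power2_norm_eq_inner)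
    also have "\<dots> = (1 - t)^2 * (x \<bullet> x) + 2 * t * (1 - t) * (x \<bullet> X m) + t^2 * (X m \<bullet> X m)"
      by (simp add: c_def inner_add_left inner_add_right inner_commute power2_eq_square algebra_simps)
    finally show ?thesis using x1 Xm1 by (simp add: dot_square_norm p_def)
  qed
  have nocol: "c t \<noteq> l *\<^sub>R X i" if t: "0 < t" "t < 1" and i: "i \<le> k" for t l i
  proof
    assume ce: "c t = l *\<^sub>R X i"
    then have "(\<Sum>j\<le>k. B j t *\<^sub>R X j) = (\<Sum>j\<le>k. (if j = i then l else 0) *\<^sub>R X j)"
      using cB sum_delta_scale[OF i, of l X] by simp
    then have co: "\<forall>j\<le>k. B j t = (if j = i then l else 0)" by (rule coords_unique[OF inj ind])
    have Bm: "B m t > 0" using am t by (simp add: B_def) (smt (verit) mult_nonneg_nonneg)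
    show False
    proof (cases "i = m")
      case False
      then show False using co m Bm by auto
    next
      case True
      have a0: "a j = (if j = m then a m else 0)" if "j \<le> k" for j
        using co that t True by (auto simp: B_def)
      have "x = (\<Sum>j\<le>k. (if j = m then a m else 0) *\<^sub>R X j)"
        unfolding xa by (rule sum.cong) (use a0 in auto)
      then have xam: "x = a m *\<^sub>R X m" using sum_delta_scale[OF m] by simp
      then have "\<bar>a m\<bar> = 1" using x1 Xm1 by simp
      then have "a m = 1" using am by simp
      then show False using xam xm by simp
    qed
  qed
  have Npos: "N t > 0" if "0 < t" "t < 1" for t
    using nocol[OF that m, of 0] by (simp add: N_def)
  define y where "y t = (1 / N t) *\<^sub>R c t" for t
  have y1: "norm (y t) = 1" if "0 < t" "t < 1" for t
    using Npos[OF that] by (simp add: y_def N_def)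
  have yX: "y t \<bullet> X i = s i t" for t i
    by (simp add: y_def s_def cX)
  have yne: "y t \<noteq> l *\<^sub>R X i" if t: "0 < t" "t < 1" and i: "i \<le> k" for t l i
  proof
    assume "y t = l *\<^sub>R X i"
    moreover have "c t = N t *\<^sub>R y t" using Npos[OF t] by (simp add: y_def)
    ultimately have "c t = (N t * l) *\<^sub>R X i" by simp
    then show False using nocol[OF t i] by blast
  qed
  have sb: "\<bar>s i t\<bar> < 1" if t: "0 < t" "t < 1" and i: "i \<le> k" for t i
  proof -
    have Xi: "norm (X i) = 1" using X1 i by auto
    have le: "\<bar>s i t\<bar> \<le> 1" using unit_inner_abs[OF y1[OF t] Xi] yX by simp
    have "s i t \<noteq> 1"
    proof
      assume "s i t = 1"
      then have "y t = X i" using unit_inner_one[OF y1[OF t] Xi] yX by simp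
      then show False using yne[OF t i, of 1] by simp
    qed
    moreover have "s i t \<noteq> -1"
    proof
      assume "s i t = -1"
      then have "y t = - X i" using unit_inner_mone[OF y1[OF t] Xi] yX by simp
      then show False using yne[OF t i, of "-1"] by simp
    qed
    ultimately show ?thesis using le by linarith
  qed
  have inEBS: "y t \<in> EBS X k" if t: "0 < t" "t < 1" and nz: "psi t \<noteq> 0" for t
  proof (rule ebs_suff[OF y1[OF t] X1, of "\<lambda>i. B i t / N t"])
    show "\<forall>i\<le>k. y t \<noteq> - X i" using yne[OF t, of _ "-1"] by auto
    show "y t = (\<Sum>i\<le>k. (B i t / N t) *\<^sub>R X i)"
      by (simp add: y_def cB scaleR_sum_right)
    have "(\<Sum>i\<le>k. B i t / N t * (sin (arccos (y t \<bullet> X i)) / arccos (y t \<bullet> X i))) = psi t / N t"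
      by (simp add: yX psi_def G_def sum_divide_distrib mult.commute)
    then show "(\<Sum>i\<le>k. B i t / N t * (sin (arccos (y t \<bullet> X i)) / arccos (y t \<bullet> X i))) \<noteq> 0"
      using nz Npos[OF t] by simp
  qed
  have qm: "q m = 1" using Xm1 by (simp add: q_def dot_square_norm)
  have ev01: "eventually (\<lambda>t. t \<in> {0<..<1}) (at_left (1::real))"
    by (rule eventually_at_left_real) simp
  have lim_s: "((\<lambda>t. s i t) \<longlongrightarrow> q i) (at_left 1)" for i
  proof -
    have "((\<lambda>t. ((1 - t) * p i + t * q i) / norm ((1 - t) *\<^sub>R x + t *\<^sub>R X m)) \<longlongrightarrow>
        ((1 - 1) * p i + 1 * q i) / norm ((1 - 1) *\<^sub>R x + 1 *\<^sub>R X m)) (at_left 1)"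
      using Xm1 by (intro tendsto_intros) auto
    then show ?thesis using Xm1 by (simp add: s_def N_def c_def)
  qed
  have lim_term: "((\<lambda>t. B i t * G (s i t)) \<longlongrightarrow> (if i = m then 1 else 0)) (at_left 1)" for i
  proof (cases "i = m")
    case False
    have "((\<lambda>t. B i t) \<longlongrightarrow> (1 - 1) * a i + 0) (at_left 1)"
      unfolding B_def using False by (intro tendsto_intros) auto
    then have B0: "((\<lambda>t. B i t) \<longlongrightarrow> 0) (at_left 1)" by simp
    have "((\<lambda>t. B i t * G (s i t)) \<longlongrightarrow> 0) (at_left 1)"
    proof (rule tendsto_0_le[OF B0, of _ 1])
      show "\<forall>\<^sub>F t in at_left 1. norm (B i t * G (s i t)) \<le> norm (B i t) * 1"
      proof (intro always_eventually allI)
        fix t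
        have "norm (B i t * G (s i t)) = \<bar>B i t\<bar> * \<bar>sin (arccos (s i t)) / arccos (s i t)\<bar>"
          by (simp only: G_def real_norm_def abs_mult)
        also have "\<dots> \<le> \<bar>B i t\<bar> * 1" by (rule mult_left_mono[OF abs_sinc_le1]) simp
        finally show "norm (B i t * G (s i t)) \<le> norm (B i t) * 1" by simp
      qed
    qed
    then show ?thesis using False by simp
  next
    case True
    have "((\<lambda>t. B m t) \<longlongrightarrow> (1 - 1) * a m + 1) (at_left 1)"
      unfolding B_def by (intro tendsto_intros) auto
    then have B1: "((\<lambda>t. B m t) \<longlongrightarrow> 1) (at_left 1)" by simp
    have evs: "eventually (\<lambda>t. s m t \<in> {-1..1} \<and> \<bar>s m t\<bar> < 1) (at_left 1)"
      using ev01
    proof eventually_elim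
      case (elim t)
      then have "\<bar>s m t\<bar> < 1" using sb[of t m] m by auto
      then show ?case by auto
    qed
    have th0: "((\<lambda>t. arccos (s m t)) \<longlongrightarrow> arccos 1) (at_left 1)"
      by (rule continuous_on_tendsto_compose[OF continuous_on_arccos' lim_s[of m, unfolded qm]])
         (use evs in \<open>auto elim: eventually_mono\<close>)
    have "eventually (\<lambda>t. arccos (s m t) \<noteq> 0) (at_left 1)"
      using evs by eventually_elim (auto simp: arccos_eq_0_iff)
    then have "filterlim (\<lambda>t. arccos (s m t)) (at 0) (at_left 1)"
      using th0 by (intro filterlim_atI) auto
    from filterlim_compose[OF sinc_at_0' this]
    have G1: "((\<lambda>t. G (s m t)) \<longlongrightarrow> 1) (at_left 1)" by (simp add: G_def)
    show ?thesis using tendsto_mult[OF B1 G1] True by simp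
  qed
  have "(psi \<longlongrightarrow> (\<Sum>i\<le>k. if i = m then 1 else 0)) (at_left 1)"
    unfolding psi_def by (intro tendsto_sum lim_term)
  then have psi1: "(psi \<longlongrightarrow> 1) (at_left 1)" using m by (simp add: sum.delta)
  have "eventually (\<lambda>t. t \<in> {0<..<1} \<and> 0 < psi t) (at_left 1)"
    using eventually_conj[OF ev01 order_tendstoD(1)[OF psi1, of 0]] by simp
  moreover have "at_left (1::real) \<noteq> bot" by simp
  ultimately obtain t1 where "t1 \<in> {0<..<1} \<and> 0 < psi t1"
    using eventually_happens' by blast
  then have t1: "t1 \<in> {0<..<1}" "psi t1 \<noteq> 0" by auto
  define d where "d i = (if i = m then 1 else 0 :: real)" for i
  define CQ where "CQ z = (1 - z)^2 + 2 * z * (1 - z) * complex_of_real (p m) + z^2" for z :: complex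
  define CS where "CS i z = ((1 - z) * of_real (p i) + z * of_real (q i)) / csqrt (CQ z)" for i z
  define CG where "CG w = sin (Arccos w) / Arccos w" for w :: complex
  define CPsi where "CPsi z = (\<Sum>i\<le>k. ((1 - z) * of_real (a i) + of_real (d i) * z) * CG (CS i z))" for z
  define A where "A = UNIV \<inter> CQ -` (- \<real>\<^sub>\<le>\<^sub>0)"
  define S0 where "S0 = A \<inter> (\<Inter>i\<in>{..k}. A \<inter> CS i -` ball 0 1)"
  have contQ: "continuous_on UNIV CQ" unfolding CQ_def by (intro continuous_intros)
  have openA: "open A" unfolding A_def
    by (rule continuous_open_preimage[OF contQ]) auto
  have holQ: "CQ holomorphic_on A" unfolding CQ_def by (intro holomorphic_intros)
  have QA: "CQ z \<notin> \<real>\<^sub>\<le>\<^sub>0" if "z \<in> A" for z using that by (auto simp: A_def)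
  have holCS: "CS i holomorphic_on A" for i
  proof -
    have "(\<lambda>z. csqrt (CQ z)) holomorphic_on A" by (rule holomorphic_on_csqrt'[OF holQ QA])
    moreover have "csqrt (CQ z) \<noteq> 0" if "z \<in> A" for z
    proof
      assume "csqrt (CQ z) = 0"
      then have "CQ z = 0" by simp
      then show False using QA[OF that] by simp
    qed
    ultimately show ?thesis unfolding CS_def[abs_def]
      by (intro holomorphic_intros holQ) (auto dest: QA)
  qed
  have opi: "open (A \<inter> CS i -` ball 0 1)" for i
    by (rule continuous_open_preimage[OF holomorphic_on_imp_continuous_on[OF holCS] openA]) simp
  have "open (\<Inter>i\<in>{..k}. A \<inter> CS i -` ball 0 1)" using opi by (intro open_INT) auto
  then have openS0: "open S0" unfolding S0_def using openA by (rule open_Int[rotated])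
  have holAc: "Arccos holomorphic_on ball 0 1"
  proof (rule holomorphic_on_Arccos)
    fix z :: complex assume "z \<in> ball 0 1" "Im z = 0"
    then show "\<bar>Re z\<bar> < 1" by (simp add: cmod_eq_Re)
  qed
  have Acnz: "Arccos w \<noteq> 0" if "w \<in> ball 0 1" for w
  proof
    assume "Arccos w = 0"
    then have "w = 1" by (metis cos_Arccos cos_zero)
    then show False using that by simp
  qed
  have holCG: "(\<lambda>z. CG (CS i z)) holomorphic_on S0" if i: "i \<le> k" for i
  proof -
    have sub0: "CS i ` S0 \<subseteq> ball 0 1" using i by (auto simp: S0_def)
    have h1: "CS i holomorphic_on S0" by (rule holomorphic_on_subset[OF holCS]) (auto simp: S0_def)
    have h2: "(\<lambda>z. Arccos (CS i z)) holomorphic_on S0"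
      using holomorphic_on_compose_gen[OF h1 holAc sub0] by (simp add: o_def)
    have nz: "Arccos (CS i z) \<noteq> 0" if "z \<in> S0" for z using Acnz sub0 that by auto
    show ?thesis unfolding CG_def
      by (intro holomorphic_intros h2 nz)
  qed
  have holPsi: "CPsi holomorphic_on S0" unfolding CPsi_def[abs_def]
    by (intro holomorphic_intros holCG) auto
  have CSr: "CS i (of_real t) = of_real (s i t)" if t: "0 < t" "t < 1" for i t
  proof -
    have "CQ (of_real t) = of_real ((N t)^2)" by (simp add: CQ_def Nsq)
    moreover have "csqrt (of_real ((N t)^2)) = of_real (N t)"
      using Npos[OF t] by (simp add: csqrt_of_real)
    ultimately show ?thesis by (simp add: CS_def s_def)
  qed
  have CQr: "CQ (of_real t) \<notin> \<real>\<^sub>\<le>\<^sub>0" if t: "0 < t" "t < 1" for t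
  proof -
    have e: "CQ (of_real t) = of_real ((N t)^2)" by (simp add: CQ_def Nsq)
    have "(of_real ((N t)^2) :: complex) \<notin> \<real>\<^sub>\<le>\<^sub>0"
      using Npos[OF t] by (subst nonpos_Reals_of_real_iff) simp
    with e show ?thesis by (simp only:) simp
  qed
  have CGr: "CG (of_real u) = of_real (G u)" if "\<bar>u\<bar> \<le> 1" for u
    using that by (simp add: CG_def G_def of_real_arccos[symmetric] sin_of_real[symmetric])
  have eqr: "CPsi (of_real t) = of_real (psi t)" if "t \<in> {0<..<1}" for t
  proof -
    have t: "0 < t" "t < 1" using that by auto
    have "CPsi (of_real t) = (\<Sum>i\<le>k. of_real (B i t * G (s i t)))"
      unfolding CPsi_def
    proof (rule sum.cong)
      fix i assume "i \<in> {..k}"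
      then have "\<bar>s i t\<bar> \<le> 1" using sb[OF t, of i] by auto
      then show "((1 - of_real t) * of_real (a i) + of_real (d i) * of_real t) * CG (CS i (of_real t)) =
          of_real (B i t * G (s i t))"
        by (simp add: CSr[OF t] CGr B_def d_def)
    qed simp
    then show ?thesis by (simp add: psi_def)
  qed
  have subS0: "of_real ` {0<..<1} \<subseteq> S0"
  proof
    fix z assume "z \<in> (of_real :: real \<Rightarrow> complex) ` {0<..<1}"
    then obtain t where t: "0 < t" "t < 1" and z: "z = of_real t" by auto
    have "z \<in> A" using CQr[OF t] z by (simp add: A_def)
    moreover have "CS i z \<in> ball 0 1" if "i \<le> k" for i
      using sb[OF t that] CSr[OF t] z by simp
    ultimately show "z \<in> S0" by (auto simp: S0_def)
  qed
  have near: "\<exists>t. 0 < t \<and> t < \<delta> \<and> t < 1 \<and> psi t \<noteq> 0" if "0 < \<delta>" for \<delta>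
    by (rule nonzero_near_zero[OF holPsi openS0 subS0 eqr t1 that])
  have limy: "(y \<longlongrightarrow> x) (at_right 0)"
  proof -
    have "((\<lambda>t. (1 / norm ((1 - t) *\<^sub>R x + t *\<^sub>R X m)) *\<^sub>R ((1 - t) *\<^sub>R x + t *\<^sub>R X m)) \<longlongrightarrow>
        (1 / norm ((1 - 0) *\<^sub>R x + 0 *\<^sub>R X m)) *\<^sub>R ((1 - 0) *\<^sub>R x + 0 *\<^sub>R X m)) (at_right 0)"
      using x1 by (intro tendsto_intros) auto
    then show ?thesis using x1 by (simp add: y_def[abs_def] N_def c_def)
  qed
  show ?thesis unfolding closure_approachable
  proof (intro allI impI)
    fix e :: real assume e: "0 < e"
    have "eventually (\<lambda>t. dist (y t) x < e) (at_right 0)" using tendstoD[OF limy e] .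
    then obtain b where b: "b > 0" "\<forall>t>0. t < b \<longrightarrow> dist (y t) x < e"
      by (auto simp: eventually_at_right_field)
    obtain t where t: "0 < t" "t < b" "t < 1" "psi t \<noteq> 0" using near[OF b(1)] by blast
    show "\<exists>y'\<in>EBS X k. dist y' x < e"
      using inEBS[OF t(1,3,4)] b(2) t by blast
  qed
qed



lemma X_in_EBS:
  fixes X :: "nat \<Rightarrow> 'a::euclidean_space" and k :: nat
  assumes X1: "\<forall>i\<le>k. norm (X i) = 1" and inj: "inj_on X {..k}" and ind: "independent (X ` {..k})"
    and m: "m \<le> k"
  shows "X m \<in> EBS X k"
proof -
  have Xm1: "norm (X m) = 1" using X1 m by auto
  have na: "X m \<noteq> - X i" if i: "i \<le> k" for i
  proof
    assume H: "X m = - X i"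
    show False
    proof (cases "i = m")
      case True
      then have "2 *\<^sub>R X m = 0" using H by (simp add: scaleR_2 eq_neg_iff_add_eq_0)
      then have "X m = 0" by simp
      then show False using Xm1 by simp
    next
      case False
      have "(\<Sum>j\<le>k. (if j = m then 1 else 0) *\<^sub>R X j) = (\<Sum>j\<le>k. (if j = i then -1 else 0) *\<^sub>R X j)"
        using sum_delta_scale[OF m, of 1 X] sum_delta_scale[OF i, of "-1" X] H by simp
      then have "\<forall>j\<le>k. (if j = m then 1 else 0) = (if j = i then -1 else (0::real))"
        by (rule coords_unique[OF inj ind])
      then show False using m False by force
    qed
  qed
  have "X m \<in> Mstar X k" using Xm1 na by (auto simp: Mstar_def usphere_def)
  moreover have "(\<Sum>j\<le>k. (if j = m then 1 else 0) *\<^sub>R sph_log (X m) (X j)) = 0"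
  proof -
    have "(\<Sum>j\<le>k. (if j = m then 1 else 0) *\<^sub>R sph_log (X m) (X j)) = sph_log (X m) (X m)"
      using sum_delta_scale[OF m, of 1 "\<lambda>j. sph_log (X m) (X j)"] by simp
    also have "\<dots> = 0" using Xm1 by (simp add: sph_log_def dot_square_norm)
    finally show ?thesis .
  qed
  moreover have "(\<Sum>j\<le>k. (if j = m then 1 else 0::real)) \<noteq> 0" using m by (simp add: sum.delta)
  ultimately show ?thesis unfolding EBS_def by blast
qed

lemma main_gen:
  fixes X :: "nat \<Rightarrow> 'a::euclidean_space" and k :: nat
  assumes k1: "1 \<le> k" and Xs: "\<forall>i\<le>k. X i \<in> usphere" and inj: "inj_on X {..k}"
    and ind: "independent (X ` {..k})"
  shows "EBS X k \<subseteq> span (X ` {..k}) \<inter> usphere \<and> Aff X k = span (X ` {..k}) \<inter> usphere"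
proof -
  have X1: "\<forall>i\<le>k. norm (X i) = 1" using Xs by (simp add: usphere_def)
  have E: "EBS X k \<subseteq> span (X ` {..k}) \<inter> usphere" by (rule ebs_span[OF X1 inj ind])
  have us: "usphere = sphere (0::'a) 1" by (auto simp: usphere_def)
  have cl: "closed (span (X ` {..k}) \<inter> usphere)" unfolding us by (intro closed_Int closed_span closed_sphere)
  have A1: "Aff X k \<subseteq> span (X ` {..k}) \<inter> usphere"
    unfolding Aff_def by (rule closure_minimal[OF E cl])
  have A2: "span (X ` {..k}) \<inter> usphere \<subseteq> Aff X k"
  proof
    fix x assume x: "x \<in> span (X ` {..k}) \<inter> usphere"
    then have x1: "norm x = 1" by (simp add: usphere_def)
    obtain a where xa: "x = (\<Sum>i\<le>k. a i *\<^sub>R X i)" using coords_exist[OF inj] x by blast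
    show "x \<in> Aff X k"
    proof (cases "\<exists>m\<le>k. x = X m")
      case True
      then obtain m where "m \<le> k" "x = X m" by blast
      then show ?thesis using X_in_EBS[OF X1 inj ind] closure_subset unfolding Aff_def by blast
    next
      case notX: False
      show ?thesis
      proof (cases "\<exists>m\<le>k. 0 \<le> a m")
        case True
        then obtain m where m: "m \<le> k" "0 \<le> a m" by blast
        then show ?thesis using chord_density[OF X1 inj ind x1 xa m] notX unfolding Aff_def by blast
      next
        case False
        then have neg: "\<forall>m\<le>k. a m < 0" by auto
        have na: "x \<noteq> - X i" if i: "i \<le> k" for i
        proof
          assume H: "x = - X i"
          define j where "j = (if i = 0 then 1 else 0::nat)"
          have j: "j \<le> k" "j \<noteq> i" using k1 by (auto simp: j_def)
          have "(\<Sum>l\<le>k. a l *\<^sub>R X l) = (\<Sum>l\<le>k. (if l = i then -1 else 0) *\<^sub>R X l)"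
            using sum_delta_scale[OF i, of "-1" X] H xa by simp
          then have "\<forall>l\<le>k. a l = (if l = i then -1 else 0)" by (rule coords_unique[OF inj ind])
          then have "a j = 0" using j by auto
          then show False using neg j by auto
        qed
        have X01: "norm (X 0) = 1" using X1 by auto
        have b0: "\<bar>x \<bullet> X 0\<bar> \<le> 1" by (rule unit_inner_abs[OF x1 X01])
        have ne1: "x \<bullet> X 0 \<noteq> 1" using unit_inner_one[OF x1 X01] notX by auto
        have ne2: "x \<bullet> X 0 \<noteq> -1" using unit_inner_mone[OF x1 X01] na[of 0] by auto
        have G0: "0 < sin (arccos (x \<bullet> X 0)) / arccos (x \<bullet> X 0)"
        proof -
          have "-1 < x \<bullet> X 0" "x \<bullet> X 0 < 1" using b0 ne1 ne2 by auto
          then have "sin (arccos (x \<bullet> X 0)) > 0" "arccos (x \<bullet> X 0) > 0"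
            using sin_arccos_nonzero[of "x \<bullet> X 0"] arccos_eq_0_iff[of "x \<bullet> X 0"]
              arccos_lbound[of "x \<bullet> X 0"] sin_arccos_abs[of "x \<bullet> X 0"]
            by (auto simp: less_le abs_square_le_1)
          then show ?thesis by simp
        qed
        have Gi: "0 \<le> sin (arccos (x \<bullet> X i)) / arccos (x \<bullet> X i)" if "i \<le> k" for i
        proof -
          have bi: "\<bar>x \<bullet> X i\<bar> \<le> 1" using unit_inner_abs[OF x1] X1 that by auto
          have "0 \<le> arccos (x \<bullet> X i)" using bi arccos_lbound[of "x \<bullet> X i"] by (auto simp: abs_le_iff)
          moreover have "0 \<le> sin (arccos (x \<bullet> X i))" using sin_arccos_abs[OF bi] bi by (simp add: abs_square_le_1)
          ultimately show ?thesis by simp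
        qed
        have "0 < (\<Sum>i\<le>k. - (a i * (sin (arccos (x \<bullet> X i)) / arccos (x \<bullet> X i))))"
        proof (rule sum_pos2[of _ 0])
          show "0 < - (a 0 * (sin (arccos (x \<bullet> X 0)) / arccos (x \<bullet> X 0)))"
            using mult_neg_pos[OF _ G0, of "a 0"] neg by simp
          show "0 \<le> - (a i * (sin (arccos (x \<bullet> X i)) / arccos (x \<bullet> X i)))" if "i \<in> {..k}" for i
          proof -
            have "a i \<le> 0" "0 \<le> sin (arccos (x \<bullet> X i)) / arccos (x \<bullet> X i)"
              using neg Gi that by (auto simp: less_imp_le)
            then show ?thesis
              using mult_nonpos_nonneg by (metis neg_0_le_iff_le)
          qed
        qed auto
        then have "(\<Sum>i\<le>k. a i * (sin (arccos (x \<bullet> X i)) / arccos (x \<bullet> X i))) \<noteq> 0"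
          by (simp add: sum_negf)
        then have "x \<in> EBS X k" using ebs_suff[OF x1 X1 _ xa] na by blast
        then show ?thesis using closure_subset unfolding Aff_def by blast
      qed
    qed
  qed
  show ?thesis using E A1 A2 by blast
qed

theorem mainTheorem5:
  fixes X :: "nat \<Rightarrow> 'a::euclidean_space" and k :: nat
  assumes "1 \<le> k"
    and "\<forall>i\<le>k. X i \<in> usphere"
    and "inj_on X {..k}"
    and "independent (X ` {..k})"
  shows "EBS X k \<subseteq> span (X ` {..k}) \<inter> usphere
     \<and> Aff X k = span (X ` {..k}) \<inter> usphere
     \<and> (\<forall>(Y :: nat \<Rightarrow> 'a) m. 1 \<le> m \<and> (\<forall>i\<le>m. Y i \<in> usphere) \<and> inj_on Y {..m}
          \<and> independent (Y ` {..m}) \<and> span (Y ` {..m}) = span (X ` {..k})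
          \<longrightarrow> Aff Y m = Aff X k)"
proof -
  have MX: "EBS X k \<subseteq> span (X ` {..k}) \<inter> usphere \<and> Aff X k = span (X ` {..k}) \<inter> usphere"
    by (rule main_gen[OF assms])
  have "Aff Y m = Aff X k" if "1 \<le> m \<and> (\<forall>i\<le>m. Y i \<in> usphere) \<and> inj_on Y {..m}
          \<and> independent (Y ` {..m}) \<and> span (Y ` {..m}) = span (X ` {..k})" for Y :: "nat \<Rightarrow> 'a" and m
  proof -
    have "Aff Y m = span (Y ` {..m}) \<inter> usphere" using main_gen[of m Y] that by blast
    then show ?thesis using MX that by simp
  qed
  then show ?thesis using MX by blast
qed

end
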